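(* Let $G_n$ be a finite simple graph on $n\ge1$ vertices and let $x\in V(G_n)$ be a dominating vertex. Then for every $t\ge0$ and $y\in V(G_n)$, $$P^x_{G_n,t}(y)=\begin{cases}1-\dfrac2n\left(1-\dfrac1n\right)(1-\cos nt), & y=x,\\[2mm] \dfrac{2}{n^2}(1-\cos nt), & y\ne x.\end{cases}$$ In particular, for any sequence of graphs $G_n$ with $n\to\infty$ vertices and dominating vertices $x_n\in V(G_n)$, $\lim_{n\to\infty}P^{x_n}_{G_n,t}(x_n)=1$ for every fixed $t\ge0$.
   Context: For a finite simple graph $G$, $L_G=D_G-A_G$ is its Laplacian ($A_G$ adjacency matrix, $D_G$ diagonal degree matrix). The continuous-time quantum walk (CTQW) on $G$ has evolution operator $U_{G,t}=e^{\sqrt{-1}\,tL_G}$ ($t\ge0$), and the transition probability is $P^x_{G,t}(y)=|(U_{G,t})_{x,y}|^2$ for $x,y\in V(G)$. A vertex of a graph on $n$ vertices is dominating if its degree is $n-1$, i.e., it is adjacent to all other vertices. *)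

theory Defs
  imports "HOL-Analysis.Analysis"
begin

definition simple_graph :: "'a set \<Rightarrow> ('a \<Rightarrow> 'a \<Rightarrow> bool) \<Rightarrow> bool" where
  "simple_graph V E \<longleftrightarrow> finite V \<and> (\<forall>u v. E u v \<longrightarrow> u \<in> V \<and> v \<in> V)
     \<and> (\<forall>u v. E u v \<longrightarrow> E v u) \<and> (\<forall>v. \<not> E v v)"

definition degree :: "'a set \<Rightarrow> ('a \<Rightarrow> 'a \<Rightarrow> bool) \<Rightarrow> 'a \<Rightarrow> nat" where
  "degree V E v = card {w \<in> V. E v w}"

definition dominating :: "'a set \<Rightarrow> ('a \<Rightarrow> 'a \<Rightarrow> bool) \<Rightarrow> 'a \<Rightarrow> bool" where
  "dominating V E v \<longleftrightarrow> v \<in> V \<and> degree V E v = card V - 1"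

definition laplacian :: "'a set \<Rightarrow> ('a \<Rightarrow> 'a \<Rightarrow> bool) \<Rightarrow> 'a \<Rightarrow> 'a \<Rightarrow> complex" where
  "laplacian V E u v = (if u = v then of_nat (degree V E u) else 0) - (if E u v then 1 else 0)"

fun mat_pow :: "'a set \<Rightarrow> ('a \<Rightarrow> 'a \<Rightarrow> complex) \<Rightarrow> nat \<Rightarrow> 'a \<Rightarrow> 'a \<Rightarrow> complex" where
  "mat_pow V M 0 = (\<lambda>u v. if u = v then 1 else 0)"
| "mat_pow V M (Suc k) = (\<lambda>u v. \<Sum>w\<in>V. mat_pow V M k u w * M w v)"

text \<open>CTQW evolution operator U_t = exp(i t L), defined entrywise by the exponential series.\<close>
definition ctqw :: "'a set \<Rightarrow> ('a \<Rightarrow> 'a \<Rightarrow> bool) \<Rightarrow> real \<Rightarrow> 'a \<Rightarrow> 'a \<Rightarrow> complex" where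
  "ctqw V E t u v = (\<Sum>k. (\<i> * complex_of_real t) ^ k / of_nat (fact k) * mat_pow V (laplacian V E) k u v)"

definition trans_prob :: "'a set \<Rightarrow> ('a \<Rightarrow> 'a \<Rightarrow> bool) \<Rightarrow> 'a \<Rightarrow> real \<Rightarrow> 'a \<Rightarrow> real" where
  "trans_prob V E x t y = (cmod (ctqw V E t x y))\<^sup>2"

end

theory Submission
  imports Defs
begin

lemma count_sum:
  assumes "finite A"
  shows "(\<Sum>w\<in>A. (if P w then 1 else 0::complex)) = of_nat (card {w\<in>A. P w})"
  using assms by (simp add: sum.inter_filter[symmetric])

lemma col_sum:
  assumes G: "simple_graph V E" and v: "v \<in> V"
  shows "(\<Sum>w\<in>V. laplacian V E w v) = 0"
proof -
  have fin: "finite V" using G by (simp add: simple_graph_def)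
  have sym: "\<And>w. E w v = E v w" using G by (auto simp: simple_graph_def)
  have "(\<Sum>w\<in>V. laplacian V E w v) =
     (\<Sum>w\<in>V. (if w = v then of_nat (degree V E w) else 0)) - (\<Sum>w\<in>V. (if E w v then 1 else 0::complex))"
    unfolding laplacian_def by (simp add: sum_subtractf)
  also have "\<dots> = of_nat (degree V E v) - of_nat (card {w\<in>V. E v w})"
    using v fin by (simp add: count_sum sym)
  also have "\<dots> = 0" by (simp add: degree_def)
  finally show ?thesis .
qed

lemma dom_edges:
  assumes G: "simple_graph V E" and D: "dominating V E x"
  shows "{w\<in>V. E x w} = V - {x}"
proof -
  have fin: "finite V" using G by (simp add: simple_graph_def)
  have xV: "x \<in> V" using D by (simp add: dominating_def)
  have sub: "{w\<in>V. E x w} \<subseteq> V - {x}" using G by (auto simp: simple_graph_def)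
  have "card {w\<in>V. E x w} = card (V - {x})"
    using D fin xV by (simp add: dominating_def degree_def)
  then show ?thesis using sub fin by (metis card_subset_eq finite_Diff)
qed

lemma row_x:
  assumes G: "simple_graph V E" and D: "dominating V E x" and v: "v \<in> V"
  shows "laplacian V E x v = of_nat (card V) * (if v = x then 1 else 0) - 1"
proof -
  have fin: "finite V" using G by (simp add: simple_graph_def)
  have xV: "x \<in> V" using D by (simp add: dominating_def)
  have pos: "card V \<ge> 1" using fin xV by (metis One_nat_def Suc_leI card_gt_0_iff empty_iff)
  have Exv: "E x v \<longleftrightarrow> v \<noteq> x" using dom_edges[OF G D] v by blast
  have deg: "degree V E x = card V - 1" using D by (simp add: dominating_def)
  show ?thesis
    using Exv deg pos by (auto simp: laplacian_def of_nat_diff)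
qed

lemma matpow_x:
  assumes G: "simple_graph V E" and D: "dominating V E x" and v: "v \<in> V"
  shows "mat_pow V (laplacian V E) k x v =
     of_nat (card V) ^ k * ((if v = x then 1 else 0) - 1 / of_nat (card V))
     + (if k = 0 then 1 / of_nat (card V) else 0)"
  using v
proof (induction k arbitrary: v)
  case 0
  have fin: "finite V" using G by (simp add: simple_graph_def)
  have xV: "x \<in> V" using D by (simp add: dominating_def)
  have "card V \<noteq> 0" using fin xV by auto
  then show ?case by simp
next
  case (Suc k)
  define n :: complex where "n = of_nat (card V)"
  have fin: "finite V" using G by (simp add: simple_graph_def)
  have xV: "x \<in> V" using D by (simp add: dominating_def)
  have n0: "n \<noteq> 0" using fin xV by (auto simp: n_def)
  have "mat_pow V (laplacian V E) (Suc k) x v =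
    (\<Sum>w\<in>V. (n ^ k * ((if w = x then 1 else 0) - 1 / n) + (if k = 0 then 1 / n else 0)) * laplacian V E w v)"
    using Suc.IH by (simp add: n_def)
  also have "\<dots> = (\<Sum>w\<in>V. n ^ k * ((if w = x then laplacian V E w v else 0)))
      + (\<Sum>w\<in>V. ((if k = 0 then 1 / n else 0) - n^k / n) * laplacian V E w v)"
    by (subst sum.distrib[symmetric], rule sum.cong) (auto simp: algebra_simps)
  also have "\<dots> = n ^ k * laplacian V E x v"
    using fin xV col_sum[OF G Suc.prems]
    by (simp add: sum_distrib_left[symmetric] sum.delta)
  also have "\<dots> = n ^ Suc k * ((if v = x then 1 else 0) - 1 / n)"
    unfolding row_x[OF G D Suc.prems] n_def[symmetric] using n0
    by (cases "v = x") (simp_all add: field_simps)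
  finally show ?case by (simp add: n_def)
qed

lemma ctqw_x:
  assumes G: "simple_graph V E" and D: "dominating V E x" and v: "v \<in> V"
  shows "ctqw V E t x v = 1 / of_nat (card V)
     + ((if v = x then 1 else 0) - 1 / of_nat (card V)) * exp (\<i> * complex_of_real t * of_nat (card V))"
proof -
  define n :: complex where "n = of_nat (card V)"
  define a :: complex where "a = (if v = x then 1 else 0) - 1 / n"
  define z where "z = \<i> * complex_of_real t"
  have "(\<lambda>k. (z * n) ^ k /\<^sub>R fact k) sums exp (z * n)" by (rule exp_converges)
  hence s1: "(\<lambda>k. (z * n) ^ k / of_nat (fact k) * a) sums (exp (z * n) * a)"
    by (intro sums_mult2) (simp add: scaleR_conv_of_real divide_inverse mult.commute)
  have s2: "(\<lambda>k. if k = 0 then 1 / n else 0) sums (1 / n)"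
    using sums_single[of 0 "\<lambda>_. 1 / n"] by simp
  have "(\<lambda>k. (z * n) ^ k / of_nat (fact k) * a + (if k = 0 then 1 / n else 0)) sums (exp (z * n) * a + 1 / n)"
    by (rule sums_add[OF s1 s2])
  moreover have "(\<lambda>k. z ^ k / of_nat (fact k) * mat_pow V (laplacian V E) k x v)
     = (\<lambda>k. (z * n) ^ k / of_nat (fact k) * a + (if k = 0 then 1 / n else 0))"
    unfolding matpow_x[OF G D v] n_def[symmetric] a_def[symmetric]
    by (rule ext) (simp add: power_mult_distrib algebra_simps)
  ultimately have "(\<lambda>k. z ^ k / of_nat (fact k) * mat_pow V (laplacian V E) k x v) sums (exp (z * n) * a + 1 / n)"
    by simp
  then show ?thesis unfolding ctqw_def z_def[symmetric] n_def[symmetric] a_def[symmetric]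
    by (simp add: sums_unique[symmetric] algebra_simps)
qed

lemma prob_x:
  assumes G: "simple_graph V E" and D: "dominating V E x" and v: "v \<in> V"
  shows "trans_prob V E x t v =
              (let n = real (card V) in
                 if v = x then 1 - 2 / n * (1 - 1 / n) * (1 - cos (n * t))
                 else 2 / n\<^sup>2 * (1 - cos (n * t)))"
proof -
  define n where "n = real (card V)"
  have fin: "finite V" using G by (simp add: simple_graph_def)
  have xV: "x \<in> V" using D by (simp add: dominating_def)
  have n0: "n > 0" using fin xV by (auto simp: n_def card_gt_0_iff)
  define d :: real where "d = (if v = x then 1 else 0)"
  have e: "exp (\<i> * complex_of_real t * of_nat (card V)) = Complex (cos (n * t)) (sin (n * t))"
  proof -
    have "\<i> * complex_of_real t * of_nat (card V) = \<i> * complex_of_real (n * t)"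
      by (simp add: n_def)
    then show ?thesis by (metis cis_conv_exp cis.ctr)
  qed
  have c: "ctqw V E t x v = Complex (1 / n + (d - 1 / n) * cos (n * t)) ((d - 1 / n) * sin (n * t))"
    unfolding ctqw_x[OF G D v] e
    by (simp add: complex_eq_iff n_def d_def)
  have gen: "\<And>pp qq cc ss::real. (pp + qq * cc)\<^sup>2 + (qq * ss)\<^sup>2 = pp\<^sup>2 + 2 * pp * qq * cc + qq\<^sup>2 * (ss\<^sup>2 + cc\<^sup>2)"
    by algebra
  have "trans_prob V E x t v = (1 / n + (d - 1 / n) * cos (n * t))\<^sup>2 + ((d - 1 / n) * sin (n * t))\<^sup>2"
    unfolding trans_prob_def c by (simp add: cmod_power2)
  also have "\<dots> = (1 / n)\<^sup>2 + 2 * (1 / n) * (d - 1 / n) * cos (n * t) + (d - 1 / n)\<^sup>2 * ((sin (n * t))\<^sup>2 + (cos (n * t))\<^sup>2)"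
    using gen by blast
  also have "\<dots> = (1 / n)\<^sup>2 + 2 * (1 / n) * (d - 1 / n) * cos (n * t) + (d - 1 / n)\<^sup>2"
    by simp
  finally have P: "trans_prob V E x t v = (1 / n)\<^sup>2 + 2 * (1 / n) * (d - 1 / n) * cos (n * t) + (d - 1 / n)\<^sup>2" .
  show ?thesis
    unfolding P n_def[symmetric] Let_def using n0
    by (cases "v = x") (simp_all add: d_def field_simps power2_eq_square)
qed

lemma limit_part:
  fixes Vs :: "nat \<Rightarrow> 'b set" and t :: real
  assumes H: "\<forall>n\<ge>1. simple_graph (Vs n) (Es n) \<and> card (Vs n) = n \<and> dominating (Vs n) (Es n) (xs n)"
  shows "(\<lambda>n. trans_prob (Vs n) (Es n) (xs n) t (xs n)) \<longlonglongrightarrow> 1"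
proof -
  define g where "g n = 2 / real n * (1 - 1 / real n) * (1 - cos (real n * t))" for n :: nat
  have ev: "\<forall>\<^sub>F n in sequentially. trans_prob (Vs n) (Es n) (xs n) t (xs n) = 1 - g n"
  proof (rule eventually_sequentiallyI[of 1])
    fix n :: nat assume n: "n \<ge> 1"
    then have G: "simple_graph (Vs n) (Es n)" and c: "card (Vs n) = n" and D: "dominating (Vs n) (Es n) (xs n)"
      using H by auto
    have xV: "xs n \<in> Vs n" using D by (simp add: dominating_def)
    show "trans_prob (Vs n) (Es n) (xs n) t (xs n) = 1 - g n"
      using prob_x[OF G D xV, of t] c by (simp add: g_def Let_def)
  qed
  have bnd: "\<forall>\<^sub>F n in sequentially. norm (g n) \<le> 4 * inverse (real n)"
  proof (rule eventually_sequentiallyI[of 1])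
    fix n :: nat assume n: "n \<ge> 1"
    have a: "0 \<le> 1 - 1 / real n" "1 - 1 / real n \<le> 1" using n by (auto simp: field_simps)
    have b: "0 \<le> 1 - cos (real n * t)" "1 - cos (real n * t) \<le> 2"
      using cos_le_one[of "real n * t"] cos_ge_minus_one[of "real n * t"] by auto
    define p where "p = (1 - 1 / real n) * (1 - cos (real n * t))"
    have p2: "p \<le> 1 * 2"
      unfolding p_def using a b by (intro mult_mono) auto
    have p0: "0 \<le> p" unfolding p_def using a b by simp
    have "g n = 2 / real n * p" by (simp add: g_def p_def mult.assoc)
    then have "norm (g n) = 2 / real n * p" using p0 by simp
    also have "\<dots> \<le> 2 / real n * 2" using p2 by (intro mult_left_mono) auto
    finally show "norm (g n) \<le> 4 * inverse (real n)" by (simp add: field_simps)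
  qed
  have "(\<lambda>n. 4 * inverse (real n)) \<longlonglongrightarrow> 4 * 0"
    using tendsto_inverse_0_at_top[OF filterlim_real_sequentially]
    by (intro tendsto_mult tendsto_const)
  then have "g \<longlonglongrightarrow> 0" using Lim_null_comparison[OF bnd] by simp
  then have "(\<lambda>n. 1 - g n) \<longlonglongrightarrow> 1 - 0" by (intro tendsto_diff tendsto_const)
  then have "(\<lambda>n. 1 - g n) \<longlonglongrightarrow> 1" by simp
  then show ?thesis using tendsto_cong[OF ev] by simp
qed

theorem proposition3p1:
  shows "(\<forall>(V :: 'a set) E x t y. simple_graph V E \<and> dominating V E x \<and> t \<ge> 0 \<and> y \<in> V \<longrightarrow>
            trans_prob V E x t y =
              (let n = real (card V) in
                 if y = x then 1 - 2 / n * (1 - 1 / n) * (1 - cos (n * t))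
                 else 2 / n\<^sup>2 * (1 - cos (n * t))))
       \<and> (\<forall>(Vs :: nat \<Rightarrow> 'b set) Es xs (t :: real).
            (\<forall>n\<ge>1. simple_graph (Vs n) (Es n) \<and> card (Vs n) = n \<and> dominating (Vs n) (Es n) (xs n))
            \<and> t \<ge> 0 \<longrightarrow>
            (\<lambda>n. trans_prob (Vs n) (Es n) (xs n) t (xs n)) \<longlonglongrightarrow> 1)"
  apply (intro conjI allI impI)
   apply (elim conjE, erule (2) prob_x)
  apply (elim conjE, erule limit_part)
  done

end
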